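(* Let $L_{\mathcal{F}}$ and $L_{\mathcal{R}}$ be Lipschitz constants of $\mathcal{F}$ and $\mathcal{R}$ over $\Omega_\theta$, and suppose $\beta>L_{\mathcal{F}}+L_{\mathcal{R}}$. If $\bar z\in\Omega_\theta$ is a local minimizer of problem (R) or of problem (LRP), then $\bar z$ is also a local minimizer of problem (RP). If $\bar z\in\Omega_\theta\cap\Omega_3$ is a local minimizer of problem (RP), then $\bar z$ is also a local minimizer of problem (LRP).
   Context: Let $N,N_0,N_1$ be positive integers, $X=(x_1,\ldots,x_N)\in\mathbb{R}^{N_0\times N}$ a given data matrix, and $\lambda_1,\lambda_2,\beta>0$ given parameters. For a real vector $y$, $(y)_+=\max\{y,0\}$ componentwise; $e$ denotes the all-ones vector of $\mathbb{R}^{N_1}$. For a matrix $Y$, $\|Y\|_F$ is the Frobenius norm and $\|Y\|_1$ the maximum absolute column sum. The variable is $z=(\mathrm{vec}(W)^\top,b^\top,\mathrm{vec}(V)^\top)^\top\in\mathbb{R}^{N_2}$, $N_2=N_0N_1+N_1+N_0+N_1N$, where $W\in\mathbb{R}^{N_1\times N_0}$, $b=(b_1^\top,b_2^\top)^\top$ with $b_1\in\mathbb{R}^{N_1}$, $b_2\in\mathbb{R}^{N_0}$, $V=(v_1,\ldots,v_N)\in\mathbb{R}^{N_1\times N}$, and vec is columnwise vectorization. Define $\mathcal{F}(z)=\frac1N\sum_{n=1}^N\|(W^\top v_n+b_2)_+-x_n\|_2^2$, $\mathcal{R}(z)=\lambda_1\sum_{n=1}^N e^\top v_n+\lambda_2\|W\|_F^2$,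 $\mathcal{P}(z)=\beta\sum_{n=1}^N e^\top(v_n-(Wx_n+b_1)_+)$, and $\mathcal{O}=\mathcal{F}+\mathcal{R}+\mathcal{P}$. Let $\Omega_1=\{z: v_n=(Wx_n+b_1)_+,\ n=1,\ldots,N\}$, $\Omega_2=\{z: v_n\ge (Wx_n+b_1)_+,\ n=1,\ldots,N\}$. Fix $\theta>\frac1N\|X\|_F^2$ and set $\alpha=\max\left\{\frac{\theta}{\lambda_1}+\sqrt{\frac{N_1N_0\theta}{\lambda_2}}\|X\|_1,\ \frac{\theta\sqrt{N_1N_0\theta}}{\lambda_1\sqrt{\lambda_2}}+\sqrt{N\theta}+\|X\|_1\right\}$. Let $\Omega_3=\{z:\|b\|_\infty\le\alpha\}$, $\mathcal{Z}=\Omega_2\cap\Omega_3$, $\Omega_\theta=\{z\in\Omega_2:\mathcal{O}(z)\le\theta\}$. Problem (R): minimize $\mathcal{F}(z)+\mathcal{R}(z)$ subject to $z\in\Omega_1$. Problem (RP): minimize $\mathcal{O}(z)$ subject to $z\in\Omega_2$. Problem (LRP): minimize $\mathcal{O}(z)$ subject to $z\in\mathcal{Z}$. *)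

theory Defs
  imports "HOL-Analysis.Analysis"
begin

text \<open>The variable z = (vec W, b, vec V) is represented as an element of the
Euclidean product space (W, (b1, b2), V), with W :: real^'n0^'n1 (an N1 x N0 matrix),
b1 :: real^'n1, b2 :: real^'n0, V :: real^'n^'n1 (an N1 x N matrix whose columns are v_n).
The norm of this product type is the Euclidean norm of the stacked vector z.
The data matrix X :: real^'n^'n0 has columns x_n; N = CARD('n), N0 = CARD('n0), N1 = CARD('n1).\<close>

type_synonym ('n0, 'n1, 'n) var =
  "(real^'n0^'n1) \<times> ((real^'n1) \<times> (real^'n0)) \<times> (real^'n^'n1)"

definition zW :: "('n0::finite, 'n1::finite, 'n::finite) var \<Rightarrow> real^'n0^'n1" where
  "zW z = fst z"
definition zb1 :: "('n0::finite, 'n1::finite, 'n::finite) var \<Rightarrow> real^'n1" where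
  "zb1 z = fst (fst (snd z))"
definition zb2 :: "('n0::finite, 'n1::finite, 'n::finite) var \<Rightarrow> real^'n0" where
  "zb2 z = snd (fst (snd z))"
definition zV :: "('n0::finite, 'n1::finite, 'n::finite) var \<Rightarrow> real^'n^'n1" where
  "zV z = snd (snd z)"

definition col :: "real^'c^'r \<Rightarrow> 'c \<Rightarrow> real^'r" where
  "col M j = (\<chi> i. M $ i $ j)"

definition pos :: "real^'r \<Rightarrow> real^'r" where
  "pos y = (\<chi> i. max (y $ i) 0)"

definition frob :: "real^'c^'r::finite \<Rightarrow> real" where
  "frob M = sqrt (\<Sum>i\<in>UNIV. \<Sum>j\<in>UNIV. (M $ i $ j)\<^sup>2)"

definition norm1 :: "real^'c::finite^'r::finite \<Rightarrow> real" where
  "norm1 M = Max (range (\<lambda>j. \<Sum>i\<in>UNIV. \<bar>M $ i $ j\<bar>))"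

definition binf :: "('n0::finite, 'n1::finite, 'n::finite) var \<Rightarrow> real" where
  "binf z = max (Max (range (\<lambda>i. \<bar>zb1 z $ i\<bar>))) (Max (range (\<lambda>i. \<bar>zb2 z $ i\<bar>)))"

definition Ffun :: "real^'n::finite^'n0::finite \<Rightarrow> ('n0, 'n1::finite, 'n) var \<Rightarrow> real" where
  "Ffun X z = (1 / real CARD('n)) *
     (\<Sum>n\<in>UNIV. (norm (pos (transpose (zW z) *v col (zV z) n + zb2 z) - col X n))\<^sup>2)"

definition Rfun :: "real \<Rightarrow> real \<Rightarrow> ('n0::finite, 'n1::finite, 'n::finite) var \<Rightarrow> real" where
  "Rfun lam1 lam2 z = lam1 * (\<Sum>n\<in>UNIV. \<Sum>i\<in>UNIV. col (zV z) n $ i) + lam2 * (frob (zW z))\<^sup>2"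

definition Pfun :: "real^'n::finite^'n0::finite \<Rightarrow> real \<Rightarrow> ('n0, 'n1::finite, 'n) var \<Rightarrow> real" where
  "Pfun X beta z = beta * (\<Sum>n\<in>UNIV. \<Sum>i\<in>UNIV.
      (col (zV z) n - pos (zW z *v col X n + zb1 z)) $ i)"

definition Ofun :: "real^'n::finite^'n0::finite \<Rightarrow> real \<Rightarrow> real \<Rightarrow> real \<Rightarrow> ('n0, 'n1::finite, 'n) var \<Rightarrow> real" where
  "Ofun X lam1 lam2 beta z = Ffun X z + Rfun lam1 lam2 z + Pfun X beta z"

definition Omega1 :: "real^'n::finite^'n0::finite \<Rightarrow> ('n0, 'n1::finite, 'n) var set" where
  "Omega1 X = {z. \<forall>n. col (zV z) n = pos (zW z *v col X n + zb1 z)}"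

definition Omega2 :: "real^'n::finite^'n0::finite \<Rightarrow> ('n0, 'n1::finite, 'n) var set" where
  "Omega2 X = {z. \<forall>n i. col (zV z) n $ i \<ge> pos (zW z *v col X n + zb1 z) $ i}"

definition Omega3 :: "real \<Rightarrow> ('n0::finite, 'n1::finite, 'n::finite) var set" where
  "Omega3 alpha = {z. binf z \<le> alpha}"

definition Omega_theta :: "real^'n::finite^'n0::finite \<Rightarrow> real \<Rightarrow> real \<Rightarrow> real \<Rightarrow> real
    \<Rightarrow> ('n0, 'n1::finite, 'n) var set" where
  "Omega_theta X lam1 lam2 beta theta = {z \<in> Omega2 X. Ofun X lam1 lam2 beta z \<le> theta}"

definition local_minimizer :: "('a::metric_space \<Rightarrow> real) \<Rightarrow> 'a set \<Rightarrow> 'a \<Rightarrow> bool" where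
  "local_minimizer f S x \<longleftrightarrow> x \<in> S \<and> (\<exists>e>0. \<forall>y\<in>S. dist y x < e \<longrightarrow> f x \<le> f y)"

end

theory Submission
  imports Defs
begin

lemma cont_pos[continuous_intros]: "continuous_on S f \<Longrightarrow> continuous_on S (\<lambda>x. pos (f x))"
  unfolding pos_def by (intro continuous_intros)
lemma cont_col[continuous_intros]: "continuous_on S f \<Longrightarrow> continuous_on S (\<lambda>x. col (f x) n)"
  unfolding col_def by (intro continuous_intros)
lemma cont_mv[continuous_intros]: "continuous_on S f \<Longrightarrow> continuous_on S g \<Longrightarrow> continuous_on S (\<lambda>x. (f x :: real^'a^'b) *v g x)"
  unfolding matrix_vector_mult_def by (intro continuous_intros)
lemma cont_tr[continuous_intros]: "continuous_on S f \<Longrightarrow> continuous_on S (\<lambda>x. transpose (f x :: real^'a^'b))"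
  unfolding transpose_def by (intro continuous_intros)
lemma cont_frob[continuous_intros]: "continuous_on S f \<Longrightarrow> continuous_on S (\<lambda>x. frob (f x :: real^'a^'b::finite))"
  unfolding frob_def by (intro continuous_intros)
lemma cont_O: "continuous_on UNIV (Ofun X l1 l2 b :: ('n0::finite, 'n1::finite, 'n::finite) var \<Rightarrow> real)"
  unfolding Ofun_def Ffun_def Rfun_def Pfun_def zW_def zV_def zb1_def zb2_def
  by (intro continuous_intros)

lemma z_simps[simp]: "zW (a,(b,c),d) = a" "zb1 (a,(b,c),d) = b" "zb2 (a,(b,c),d) = c" "zV (a,(b,c),d) = d"
  by (simp_all add: zW_def zb1_def zb2_def zV_def)

lemma z_eta: "(zW z, (zb1 z, zb2 z), zV z) = z"
  by (simp add: zW_def zb1_def zb2_def zV_def)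

lemma col_nth[simp]: "col M n $ i = M $ i $ n" by (simp add: col_def)

definition Vp :: "real^'n::finite^'n0::finite \<Rightarrow> ('n0, 'n1::finite, 'n) var \<Rightarrow> real^'n^'n1" where
  "Vp X z = (\<chi> i n. pos (zW z *v col X n + zb1 z) $ i)"

definition zs :: "real^'n::finite^'n0::finite \<Rightarrow> ('n0, 'n1::finite, 'n) var \<Rightarrow> real \<Rightarrow> ('n0, 'n1, 'n) var" where
  "zs X z s = (zW z, (zb1 z, zb2 z), Vp X z + s *\<^sub>R (zV z - Vp X z))"

lemma Vp_zs[simp]: "Vp X (zs X z s) = Vp X z"
  by (simp add: Vp_def zs_def)

lemma zs_simps[simp]: "zW (zs X z s) = zW z" "zb1 (zs X z s) = zb1 z" "zb2 (zs X z s) = zb2 z"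
   "zV (zs X z s) = Vp X z + s *\<^sub>R (zV z - Vp X z)"
  by (simp_all add: zs_def)

lemma zs1: "zs X z 1 = z" by (simp add: zs_def z_eta)

lemma Omega2_iff: "z \<in> Omega2 X \<longleftrightarrow> (\<forall>n i. Vp X z $ i $ n \<le> zV z $ i $ n)"
  by (simp add: Omega2_def Vp_def)

lemma Omega1_iff: "z \<in> Omega1 X \<longleftrightarrow> zV z = Vp X z"
  by (auto simp add: Omega1_def Vp_def vec_eq_iff)

lemma P_eq: "Pfun X beta z = beta * (\<Sum>n\<in>UNIV. \<Sum>i\<in>UNIV. zV z $ i $ n - Vp X z $ i $ n)"
  by (simp add: Pfun_def Vp_def)

lemma norm_mat_le: "norm (M :: real^'a::finite^'b::finite) \<le> (\<Sum>i\<in>UNIV. \<Sum>j\<in>UNIV. \<bar>M $ i $ j\<bar>)"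
proof -
  have "norm M \<le> (\<Sum>i\<in>UNIV. norm (M $ i))" unfolding norm_vec_def by (rule L2_set_le_sum) auto
  also have "\<dots> \<le> (\<Sum>i\<in>UNIV. \<Sum>j\<in>UNIV. \<bar>M $ i $ j\<bar>)"
    by (intro sum_mono) (metis real_norm_def norm_le_l1_cart)
  finally show ?thesis .
qed

lemma dist_zs:
  assumes "z \<in> Omega2 X" "s \<le> 1"
  shows "dist (zs X z s) z \<le> (1 - s) * (\<Sum>n\<in>UNIV. \<Sum>i\<in>UNIV. zV z $ i $ n - Vp X z $ i $ n)"
proof -
  have e: "zs X z s - z = (0, 0, (s - 1) *\<^sub>R (zV z - Vp X z))"
    by (cases z) (auto simp add: zs_def algebra_simps)
  have "dist (zs X z s) z = norm ((s - 1) *\<^sub>R (zV z - Vp X z))"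
    by (simp add: dist_norm e)
  also have "\<dots> = (1 - s) * norm (zV z - Vp X z)" using assms(2) by simp
  also have "\<dots> \<le> (1 - s) * (\<Sum>i\<in>UNIV. \<Sum>n\<in>UNIV. \<bar>(zV z - Vp X z) $ i $ n\<bar>)"
    using assms(2) by (intro mult_left_mono norm_mat_le) auto
  also have "(\<Sum>i\<in>UNIV. \<Sum>n\<in>UNIV. \<bar>(zV z - Vp X z) $ i $ n\<bar>) = (\<Sum>n\<in>UNIV. \<Sum>i\<in>UNIV. zV z $ i $ n - Vp X z $ i $ n)"
    using assms(1) by (subst sum.swap) (simp add: Omega2_iff)
  finally show ?thesis .
qed

lemma P_nonneg: "z \<in> Omega2 X \<Longrightarrow> beta \<ge> 0 \<Longrightarrow> Pfun X beta z \<ge> 0"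
  unfolding P_eq by (intro mult_nonneg_nonneg sum_nonneg) (auto simp: Omega2_iff)

lemma coreA:
  fixes X :: "real^'n::finite^'n0::finite" and z :: "('n0, 'n1::finite, 'n) var"
  assumes beta: "beta > 0"
    and LF: "LF-lipschitz_on (Omega_theta X lam1 lam2 beta theta :: ('n0, 'n1, 'n) var set) (Ffun X)"
    and LR: "LR-lipschitz_on (Omega_theta X lam1 lam2 beta theta :: ('n0, 'n1, 'n) var set) (Rfun lam1 lam2)"
    and beta_gt: "beta > LF + LR"
    and z2: "z \<in> Omega2 X" and zt: "Ofun X lam1 lam2 beta z < theta"
  shows "Ofun X lam1 lam2 beta (zs X z 0) \<le> Ofun X lam1 lam2 beta z"
proof -
  define Ob where "Ob = (Ofun X lam1 lam2 beta :: ('n0, 'n1, 'n) var \<Rightarrow> real)"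
  define h where "h = (\<lambda>s. Ob (zs X z s))"
  define D where "D = (\<Sum>n\<in>UNIV. \<Sum>i\<in>UNIV. zV z $ i $ n - Vp X z $ i $ n)"
  have D0: "D \<ge> 0" unfolding D_def using z2 by (intro sum_nonneg) (auto simp: Omega2_iff)
  have Pz: "Pfun X beta z = beta * D" by (simp add: P_eq D_def)
  have Ps: "Pfun X beta (zs X z s) = s * (beta * D)" for s
    by (simp add: P_eq D_def sum_distrib_left algebra_simps)
  have in2: "zs X z s \<in> Omega2 X" if "0 \<le> s" for s
    using z2 that by (auto simp: Omega2_iff intro!: mult_nonneg_nonneg)
  have zT: "z \<in> Omega_theta X lam1 lam2 beta theta" using z2 zt by (simp add: Omega_theta_def)
  have key: "h s \<le> Ob z" if s: "0 \<le> s" "s \<le> 1" "h s \<le> theta" for s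
  proof -
    have sT: "zs X z s \<in> Omega_theta X lam1 lam2 beta theta"
      using in2[OF s(1)] s(3) by (simp add: Omega_theta_def h_def Ob_def)
    have dd: "dist (zs X z s) z \<le> (1 - s) * D" using dist_zs[OF z2 s(2)] by (simp add: D_def)
    have LF0: "LF \<ge> 0" and LR0: "LR \<ge> 0" using LF LR by (auto simp: lipschitz_on_def)
    have "dist (Ffun X (zs X z s)) (Ffun X z) \<le> LF * dist (zs X z s) z"
      using LF sT zT by (auto simp: lipschitz_on_def)
    also have "\<dots> \<le> LF * ((1 - s) * D)" using dd LF0 by (rule mult_left_mono)
    finally have f: "Ffun X (zs X z s) \<le> Ffun X z + LF * ((1 - s) * D)" by (simp add: dist_real_def)
    have "dist (Rfun lam1 lam2 (zs X z s)) (Rfun lam1 lam2 z) \<le> LR * dist (zs X z s) z"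
      using LR sT zT by (auto simp: lipschitz_on_def)
    also have "\<dots> \<le> LR * ((1 - s) * D)" using dd LR0 by (rule mult_left_mono)
    finally have r: "Rfun lam1 lam2 (zs X z s) \<le> Rfun lam1 lam2 z + LR * ((1 - s) * D)" by (simp add: dist_real_def)
    have "(LF + LR) * ((1 - s) * D) \<le> beta * ((1 - s) * D)"
      using beta_gt s D0 by (intro mult_right_mono) auto
    then show ?thesis using f r unfolding h_def Ob_def Ofun_def Ps Pz by (simp add: algebra_simps)
  qed
  have cont: "continuous_on {0..1} h"
    unfolding h_def Ob_def
    by (rule continuous_on_compose2[OF cont_O]) (auto simp: zs_def intro!: continuous_intros)
  have h1: "h 1 = Ob z" by (simp add: h_def zs1)
  have all: "h s < theta" if s: "0 \<le> s" "s \<le> 1" for s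
  proof (rule ccontr)
    assume "\<not> h s < theta"
    hence hs: "h s \<ge> theta" by simp
    define c where "c = (Ob z + theta) / 2"
    have "Ob z < c" "c < theta" using zt by (auto simp: c_def Ob_def)
    have "\<exists>x. s \<le> x \<and> x \<le> 1 \<and> h x = c"
      apply (rule IVT2')
      using h1 \<open>Ob z < c\<close> \<open>c < theta\<close> hs s apply auto[3]
      using s by (intro continuous_on_subset[OF cont]) auto
    then obtain x where x: "s \<le> x" "x \<le> 1" "h x = c" by blast
    have "h x \<le> Ob z" using key[of x] x s \<open>c < theta\<close> by auto
    thus False using x \<open>Ob z < c\<close> by simp
  qed
  show ?thesis using key[of 0] all[of 0] by (simp add: h_def Ob_def)
qed


definition clampz :: "real \<Rightarrow> ('n0::finite, 'n1::finite, 'n::finite) var \<Rightarrow> ('n0, 'n1, 'n) var" where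
  "clampz a z = (zW z, ((\<chi> i. max (zb1 z $ i) (-a)), (\<chi> j. max (zb2 z $ j) (-a))), zV z)"

lemma Omega3_iff: "z \<in> Omega3 a \<longleftrightarrow> (\<forall>i. \<bar>zb1 z $ i\<bar> \<le> a) \<and> (\<forall>j. \<bar>zb2 z $ j\<bar> \<le> a)"
  by (simp add: Omega3_def binf_def)

lemma norm1_ge: "(\<Sum>j\<in>UNIV. \<bar>X $ j $ n\<bar>) \<le> norm1 (X :: real^'c::finite^'r::finite)"
  unfolding norm1_def by (rule Max_ge) auto

lemma norm1_ge': "\<bar>X $ j $ n\<bar> \<le> norm1 (X :: real^'c::finite^'r::finite)"
  using norm1_ge[of X n] member_le_sum[of j UNIV "\<lambda>j. \<bar>X $ j $ n\<bar>"] by auto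

lemma frob_sq: "(frob M)\<^sup>2 = (\<Sum>i\<in>UNIV. \<Sum>j\<in>UNIV. (M $ i $ j)\<^sup>2)"
  unfolding frob_def by (simp add: sum_nonneg)

lemma entry_le_frob: "(M $ i $ j)\<^sup>2 \<le> (frob M)\<^sup>2"
proof -
  have "(M $ i $ j)\<^sup>2 \<le> (\<Sum>j\<in>UNIV. (M $ i $ j)\<^sup>2)" by (rule member_le_sum) auto
  also have "\<dots> \<le> (\<Sum>i\<in>UNIV. \<Sum>j\<in>UNIV. (M $ i $ j)\<^sup>2)" by (rule member_le_sum) (auto intro: sum_nonneg)
  finally show ?thesis by (simp add: frob_sq)
qed

lemma F_nonneg: "Ffun X z \<ge> 0"
  unfolding Ffun_def by (intro mult_nonneg_nonneg sum_nonneg) auto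


lemma clampz_simps[simp]: "zW (clampz a z) = zW z" "zV (clampz a z) = zV z"
  "zb1 (clampz a z) = (\<chi> i. max (zb1 z $ i) (-a))" "zb2 (clampz a z) = (\<chi> j. max (zb2 z $ j) (-a))"
  by (simp_all add: clampz_def)

lemma coreB:
  fixes X :: "real^'n::finite^'n0::finite" and z :: "('n0, 'n1::finite, 'n) var"
  assumes lam1: "lam1 > 0" and lam2: "lam2 > 0" and beta: "beta > 0"
    and theta: "theta > (1 / real CARD('n)) * (frob X)\<^sup>2"
    and alpha: "alpha = max (theta / lam1 + sqrt (real CARD('n1::finite) * real CARD('n0) * theta / lam2) * norm1 X)
                          (theta * sqrt (real CARD('n1) * real CARD('n0) * theta) / (lam1 * sqrt lam2)
                             + sqrt (real CARD('n) * theta) + norm1 X)"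
    and z2: "z \<in> Omega2 X" and zt: "Ofun X lam1 lam2 beta z < theta"
  shows "clampz alpha z \<in> Omega2 X \<and> clampz alpha z \<in> Omega3 alpha
         \<and> Ofun X lam1 lam2 beta (clampz alpha z) = Ofun X lam1 lam2 beta z"
proof -
  define N where "N = real CARD('n)"
  define w where "w = sqrt (real CARD('n1) * real CARD('n0) * theta / lam2)"
  define K where "K = norm1 X"
  define W where "W = zW z"
  define V where "V = zV z"
  define b1 where "b1 = zb1 z"
  define b2 where "b2 = zb2 z"
  define S where "S = (\<Sum>n\<in>UNIV. \<Sum>i\<in>UNIV. V $ i $ n)"
  have N0: "N > 0" by (simp add: N_def)
  have th0: "theta > 0"
  proof -
    have "(1 / real CARD('n)) * (frob X)\<^sup>2 \<ge> 0" by simp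
    thus ?thesis using theta by linarith
  qed
  have K0: "K \<ge> 0" unfolding K_def using norm1_ge[of X undefined] by (meson order_trans sum_nonneg abs_ge_zero)
  have w0: "w \<ge> 0" unfolding w_def using th0 lam2 by simp
  have V0: "0 \<le> V $ i $ n" for i n
  proof -
    have "0 \<le> Vp X z $ i $ n" by (simp add: Vp_def pos_def)
    also have "\<dots> \<le> V $ i $ n" using z2 by (simp add: Omega2_iff V_def)
    finally show ?thesis .
  qed
  have S0: "S \<ge> 0" unfolding S_def using V0 by (intro sum_nonneg) auto
  have Rz: "Rfun lam1 lam2 z = lam1 * S + lam2 * (frob W)\<^sup>2" by (simp add: Rfun_def S_def V_def W_def)
  have P0: "Pfun X beta z \<ge> 0" using P_nonneg[OF z2] beta by simp
  have F0: "Ffun X z \<ge> 0" by (rule F_nonneg)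
  have Oz: "Ofun X lam1 lam2 beta z = Ffun X z + lam1 * S + lam2 * (frob W)\<^sup>2 + Pfun X beta z"
    by (simp add: Ofun_def Rz)
  have "lam1 * S \<ge> 0" "lam2 * (frob W)\<^sup>2 \<ge> 0" using lam1 lam2 S0 by auto
  hence hS: "lam1 * S < theta" and hW: "lam2 * (frob W)\<^sup>2 < theta" and hF: "Ffun X z < theta"
    using zt Oz P0 F0 by linarith+
  have Slt: "S < theta / lam1" using hS lam1 by (simp add: pos_less_divide_eq mult.commute)
  have Vcol: "(\<Sum>i\<in>UNIV. V $ i $ n) \<le> S" for n
    unfolding S_def by (rule member_le_sum) (auto intro: sum_nonneg V0)
  have Vent: "V $ i $ n \<le> S" for i n
    using member_le_sum[of i UNIV "\<lambda>i. V $ i $ n"] V0 Vcol[of n] by fastforce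
  have NN: "real CARD('n1) * real CARD('n0) \<ge> 1"
    using finite_UNIV_card_ge_0[where 'a='n1] finite_UNIV_card_ge_0[where 'a='n0]
    by (metis One_nat_def Suc_leI finite_class.finite_UNIV less_one mult_le_mono nat_mult_1 of_nat_le_iff of_nat_mult of_nat_1 not_le)
  have Wij: "\<bar>W $ i $ j\<bar> \<le> w" for i j
  proof -
    have "(W $ i $ j)\<^sup>2 \<le> (frob W)\<^sup>2" by (rule entry_le_frob)
    also have "\<dots> \<le> theta / lam2" using hW lam2 by (simp add: pos_le_divide_eq mult.commute)
    also have "\<dots> \<le> real CARD('n1) * real CARD('n0) * theta / lam2"
      using NN th0 lam2 by (simp add: divide_right_mono)
    finally have "sqrt ((W $ i $ j)\<^sup>2) \<le> w" unfolding w_def by (rule real_sqrt_le_mono)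
    thus ?thesis by simp
  qed
  have Wx: "\<bar>(W *v col X n) $ i\<bar> \<le> w * K" for n i
  proof -
    have "\<bar>(W *v col X n) $ i\<bar> = \<bar>\<Sum>j\<in>UNIV. W $ i $ j * X $ j $ n\<bar>"
      by (simp add: matrix_vector_mult_def)
    also have "\<dots> \<le> (\<Sum>j\<in>UNIV. \<bar>W $ i $ j\<bar> * \<bar>X $ j $ n\<bar>)" by (rule order_trans[OF sum_abs]) (simp add: abs_mult)
    also have "\<dots> \<le> (\<Sum>j\<in>UNIV. w * \<bar>X $ j $ n\<bar>)" by (intro sum_mono mult_right_mono Wij) auto
    also have "\<dots> = w * (\<Sum>j\<in>UNIV. \<bar>X $ j $ n\<bar>)" by (simp add: sum_distrib_left)
    also have "\<dots> \<le> w * K" unfolding K_def using w0 norm1_ge[of X n] by (intro mult_left_mono)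
    finally show ?thesis .
  qed
  have WTv: "\<bar>(transpose W *v col V n) $ j\<bar> \<le> w * (theta / lam1)" for n j
  proof -
    have "\<bar>(transpose W *v col V n) $ j\<bar> = \<bar>\<Sum>i\<in>UNIV. W $ i $ j * V $ i $ n\<bar>"
      by (simp add: matrix_vector_mult_def transpose_def)
    also have "\<dots> \<le> (\<Sum>i\<in>UNIV. \<bar>W $ i $ j\<bar> * V $ i $ n)" by (rule order_trans[OF sum_abs]) (simp add: abs_mult V0)
    also have "\<dots> \<le> (\<Sum>i\<in>UNIV. w * V $ i $ n)" by (intro sum_mono mult_right_mono Wij V0)
    also have "\<dots> = w * (\<Sum>i\<in>UNIV. V $ i $ n)" by (simp add: sum_distrib_left)
    also have "\<dots> \<le> w * (theta / lam1)" using w0 Vcol[of n] Slt by (intro mult_left_mono) auto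
    finally show ?thesis .
  qed
  have a1: "theta / lam1 + w * K \<le> alpha" unfolding alpha w_def K_def by simp
  have "theta * sqrt (real CARD('n1) * real CARD('n0) * theta) / (lam1 * sqrt lam2) = theta / lam1 * w"
    unfolding w_def using lam1 lam2 by (simp add: real_sqrt_divide)
  hence a2: "theta / lam1 * w + sqrt (N * theta) + K \<le> alpha" unfolding alpha N_def K_def by simp
  have tl0: "theta / lam1 > 0" using th0 lam1 by simp
  have b1le: "b1 $ i \<le> alpha" for i
  proof (rule ccontr)
    assume "\<not> b1 $ i \<le> alpha"
    define n :: 'n where "n = undefined"
    have "(W *v col X n) $ i + b1 $ i > theta / lam1" using Wx[of n i] a1 \<open>\<not> b1 $ i \<le> alpha\<close> by linarith
    moreover have "(W *v col X n) $ i + b1 $ i \<le> V $ i $ n"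
      using z2 by (auto simp: Omega2_def pos_def W_def V_def b1_def)
    ultimately show False using Vent[of i n] Slt by linarith
  qed
  have b2le: "b2 $ j \<le> alpha" for j
  proof (rule ccontr)
    assume b2g: "\<not> b2 $ j \<le> alpha"
    define n :: 'n where "n = undefined"
    define u where "u = pos (transpose W *v col V n + b2) - col X n"
    have "u $ j \<ge> (transpose W *v col V n) $ j + b2 $ j - X $ j $ n" by (simp add: u_def pos_def)
    moreover have "X $ j $ n \<le> K" using norm1_ge'[of X j n] unfolding K_def by simp
    ultimately have uj: "u $ j > sqrt (N * theta)" using WTv[of n j] a2 b2g by (smt (verit) mult.commute)
    have sq0: "sqrt (N * theta) \<ge> 0" using N0 th0 by simp
    have "N * theta = (sqrt (N * theta))\<^sup>2" using N0 th0 by simp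
    also have "\<dots> < (u $ j)\<^sup>2" using uj sq0 by (intro power_strict_mono) auto
    also have "\<dots> \<le> (norm u)\<^sup>2" by (metis abs_ge_zero component_le_norm_cart power2_abs power_mono)
    finally have nu: "N * theta < (norm u)\<^sup>2" .
    have "(norm u)\<^sup>2 \<le> (\<Sum>n\<in>UNIV. (norm (pos (transpose W *v col V n + b2) - col X n))\<^sup>2)"
      unfolding u_def by (rule member_le_sum) auto
    hence "N * theta < (\<Sum>n\<in>UNIV. (norm (pos (transpose W *v col V n + b2) - col X n))\<^sup>2)" using nu by linarith
    hence "theta < (1 / N) * (\<Sum>n\<in>UNIV. (norm (pos (transpose W *v col V n + b2) - col X n))\<^sup>2)"
      using N0 by (simp add: field_simps)
    thus False using hF by (simp add: Ffun_def N_def W_def V_def b2_def)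
  qed
  have pe1: "pos (W *v col X n + (\<chi> i. max (b1 $ i) (-alpha))) = pos (W *v col X n + b1)" for n
  proof -
    have "max ((W *v col X n) $ i + max (b1 $ i) (-alpha)) 0 = max ((W *v col X n) $ i + b1 $ i) 0" for i
      using Wx[of n i] a1 tl0 by (cases "b1 $ i \<ge> -alpha") (auto simp: abs_le_iff)
    thus ?thesis by (simp add: pos_def vec_eq_iff)
  qed
  have pe2: "pos (transpose W *v col V n + (\<chi> j. max (b2 $ j) (-alpha))) = pos (transpose W *v col V n + b2)" for n
  proof -
    have sq0: "sqrt (N * theta) \<ge> 0" using N0 th0 by simp
    have "max ((transpose W *v col V n) $ j + max (b2 $ j) (-alpha)) 0 = max ((transpose W *v col V n) $ j + b2 $ j) 0" for j
    proof (cases "b2 $ j \<ge> -alpha")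
      case True thus ?thesis by simp
    next
      case False
      have t: "(transpose W *v col V n) $ j \<le> w * (theta / lam1)" using WTv[of n j] by (rule abs_le_D1)
      have "(transpose W *v col V n) $ j - alpha \<le> 0" "(transpose W *v col V n) $ j + b2 $ j \<le> 0"
        using t a2 K0 sq0 False mult.commute[of w "theta / lam1"] by linarith+
      thus ?thesis using False by simp
    qed
    thus ?thesis by (simp add: pos_def vec_eq_iff)
  qed
  have al0: "alpha \<ge> 0" using a1 tl0 w0 K0 by (smt (verit) mult_nonneg_nonneg)
  have c3: "clampz alpha z \<in> Omega3 alpha"
    using b1le b2le al0 unfolding Omega3_iff b1_def b2_def by (simp add: abs_le_iff max_def)
  have c2: "clampz alpha z \<in> Omega2 X"
    using z2 pe1 by (simp add: Omega2_def W_def b1_def)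
  have "Ffun X (clampz alpha z) = Ffun X z" using pe2 by (simp add: Ffun_def W_def V_def b2_def)
  moreover have "Pfun X beta (clampz alpha z) = Pfun X beta z" using pe1 by (simp add: Pfun_def W_def b1_def)
  moreover have "Rfun lam1 lam2 (clampz alpha z) = Rfun lam1 lam2 z" by (simp add: Rfun_def)
  ultimately show ?thesis using c2 c3 by (simp add: Ofun_def)
qed


lemma cont_proj: "continuous_on UNIV (\<lambda>z. zs X z 0 :: ('n0::finite, 'n1::finite, 'n::finite) var)"
  unfolding zs_def Vp_def zW_def zb1_def zb2_def zV_def by (intro continuous_intros)

lemma cont_clamp: "continuous_on UNIV (clampz a :: ('n0::finite, 'n1::finite, 'n::finite) var \<Rightarrow> _)"
  unfolding clampz_def zW_def zb1_def zb2_def zV_def by (intro continuous_intros)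

lemma cont_near:
  assumes "continuous_on UNIV f" "f x = x" "e > 0"
  shows "\<exists>d>0. \<forall>y. dist y x < d \<longrightarrow> dist (f y) x < e"
  using assms unfolding continuous_on_iff by (metis UNIV_I)

theorem corollary2p1:
  fixes X :: "real^'n::finite^'n0::finite"
    and lam1 lam2 beta theta alpha LF LR :: real
  assumes lam1: "lam1 > 0" and lam2: "lam2 > 0" and beta: "beta > 0"
    and theta: "theta > (1 / real CARD('n)) * (frob X)\<^sup>2"
    and alpha: "alpha = max (theta / lam1 + sqrt (real CARD('n1::finite) * real CARD('n0) * theta / lam2) * norm1 X)
                          (theta * sqrt (real CARD('n1) * real CARD('n0) * theta) / (lam1 * sqrt lam2)
                             + sqrt (real CARD('n) * theta) + norm1 X)"
    and LF: "LF-lipschitz_on (Omega_theta X lam1 lam2 beta theta :: ('n0, 'n1, 'n) var set) (Ffun X)"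
    and LR: "LR-lipschitz_on (Omega_theta X lam1 lam2 beta theta :: ('n0, 'n1, 'n) var set) (Rfun lam1 lam2)"
    and beta_gt: "beta > LF + LR"
  shows "(\<forall>zb :: ('n0, 'n1, 'n) var \<in> Omega_theta X lam1 lam2 beta theta.
            (local_minimizer (\<lambda>z. Ffun X z + Rfun lam1 lam2 z) (Omega1 X) zb
             \<or> local_minimizer (Ofun X lam1 lam2 beta) (Omega2 X \<inter> Omega3 alpha) zb)
            \<longrightarrow> local_minimizer (Ofun X lam1 lam2 beta) (Omega2 X) zb)
       \<and> (\<forall>zb :: ('n0, 'n1, 'n) var \<in> Omega_theta X lam1 lam2 beta theta \<inter> Omega3 alpha.
            local_minimizer (Ofun X lam1 lam2 beta) (Omega2 X) zb
            \<longrightarrow> local_minimizer (Ofun X lam1 lam2 beta) (Omega2 X \<inter> Omega3 alpha) zb)"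
proof (intro conjI ballI impI)
  define Ob where "Ob = (Ofun X lam1 lam2 beta :: ('n0, 'n1, 'n) var \<Rightarrow> real)"
  fix zb :: "('n0, 'n1, 'n) var"
  assume zT: "zb \<in> Omega_theta X lam1 lam2 beta theta"
  hence zb2: "zb \<in> Omega2 X" and zbt: "Ob zb \<le> theta" by (auto simp: Omega_theta_def Ob_def)
  assume "local_minimizer (\<lambda>z. Ffun X z + Rfun lam1 lam2 z) (Omega1 X) zb
             \<or> local_minimizer (Ofun X lam1 lam2 beta) (Omega2 X \<inter> Omega3 alpha) zb"
  then show "local_minimizer (Ofun X lam1 lam2 beta) (Omega2 X) zb"
  proof
    assume "local_minimizer (\<lambda>z. Ffun X z + Rfun lam1 lam2 z) (Omega1 X) zb"
    then obtain e where zb1: "zb \<in> Omega1 X" and e: "e > 0"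
      and loc: "\<And>y. y \<in> Omega1 X \<Longrightarrow> dist y zb < e \<Longrightarrow> Ffun X zb + Rfun lam1 lam2 zb \<le> Ffun X y + Rfun lam1 lam2 y"
      unfolding local_minimizer_def by blast
    have pz: "zs X zb 0 = zb"
    proof -
      have "zV zb = Vp X zb" using zb1 by (simp add: Omega1_iff)
      hence "zs X zb 0 = (zW zb, (zb1 zb, zb2 zb), zV zb)" by (simp add: zs_def)
      thus ?thesis by (simp only: z_eta)
    qed
    obtain d where d: "d > 0" "\<And>y. dist y zb < d \<Longrightarrow> dist (zs X y 0) zb < e"
      using cont_near[OF cont_proj pz e] by blast
    have Pzb: "Pfun X beta zb = 0" using zb1 by (simp add: P_eq Omega1_iff)
    have "Ob zb \<le> Ob y" if y: "y \<in> Omega2 X" "dist y zb < d" for y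
    proof (cases "Ob y < theta")
      case False thus ?thesis using zbt by simp
    next
      case True
      have le: "Ob (zs X y 0) \<le> Ob y"
        using coreA[OF beta LF LR beta_gt y(1)] True by (simp add: Ob_def)
      have p1: "zs X y 0 \<in> Omega1 X" by (simp add: Omega1_iff)
      have Pp: "Pfun X beta (zs X y 0) = 0" by (simp add: P_eq)
      have "Ob zb = Ffun X zb + Rfun lam1 lam2 zb" by (simp add: Ob_def Ofun_def Pzb)
      also have "\<dots> \<le> Ffun X (zs X y 0) + Rfun lam1 lam2 (zs X y 0)" using loc[OF p1 d(2)[OF y(2)]] .
      also have "\<dots> = Ob (zs X y 0)" by (simp add: Ob_def Ofun_def Pp)
      finally show ?thesis using le by simp
    qed
    thus ?thesis unfolding local_minimizer_def Ob_def using zb2 d(1) by blast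
  next
    assume "local_minimizer (Ofun X lam1 lam2 beta) (Omega2 X \<inter> Omega3 alpha) zb"
    then obtain e where zb3: "zb \<in> Omega3 alpha" and e: "e > 0"
      and loc: "\<And>y. y \<in> Omega2 X \<inter> Omega3 alpha \<Longrightarrow> dist y zb < e \<Longrightarrow> Ob zb \<le> Ob y"
      unfolding local_minimizer_def Ob_def by blast
    have "(\<chi> i. max (zb1 zb $ i) (-alpha)) = zb1 zb" "(\<chi> j. max (zb2 zb $ j) (-alpha)) = zb2 zb"
    proof -
      have "\<forall>i. -alpha \<le> zb1 zb $ i" "\<forall>j. -alpha \<le> zb2 zb $ j"
        using zb3 unfolding Omega3_iff abs_le_iff by (metis minus_le_iff)+
      thus "(\<chi> i. max (zb1 zb $ i) (-alpha)) = zb1 zb" "(\<chi> j. max (zb2 zb $ j) (-alpha)) = zb2 zb"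
        by (simp_all add: vec_eq_iff max_absorb1)
    qed
    hence cz: "clampz alpha zb = zb" unfolding clampz_def by (simp add: z_eta)
    obtain d where d: "d > 0" "\<And>y. dist y zb < d \<Longrightarrow> dist (clampz alpha y) zb < e"
      using cont_near[OF cont_clamp cz e] by blast
    have "Ob zb \<le> Ob y" if y: "y \<in> Omega2 X" "dist y zb < d" for y
    proof (cases "Ob y < theta")
      case False thus ?thesis using zbt by simp
    next
      case True
      have c: "clampz alpha y \<in> Omega2 X \<and> clampz alpha y \<in> Omega3 alpha \<and> Ob (clampz alpha y) = Ob y"
        using coreB[OF lam1 lam2 beta theta alpha y(1)] True by (simp add: Ob_def)
      thus ?thesis using loc[of "clampz alpha y"] d(2)[OF y(2)] by auto
    qed
    thus ?thesis unfolding local_minimizer_def Ob_def using zb2 d(1) by blast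
  qed
next
  fix zb :: "('n0, 'n1, 'n) var"
  assume "zb \<in> Omega_theta X lam1 lam2 beta theta \<inter> Omega3 alpha"
    "local_minimizer (Ofun X lam1 lam2 beta) (Omega2 X) zb"
  thus "local_minimizer (Ofun X lam1 lam2 beta) (Omega2 X \<inter> Omega3 alpha) zb"
    unfolding local_minimizer_def by blast
qed

end
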